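(* Let $a\in\mathbb F^*$. For all $u\in\mathbb F^n$ and $f\in\mathcal R$ we have $\mathfrak p_a\big(u\,M^\theta_a(\overline f)\big)=\mathfrak p_a(u)\,\overline f$. Consequently, $\mathrm{im}\,M^\theta_a(\overline f)=\mathfrak v_a(\mathcal R\overline f)$, where $\mathcal R\overline f$ is the left $\mathcal R$-submodule of $\mathcal S_a$ generated by $\overline f$.
   Context: $\mathbb F$ is a finite field, $\theta\in\mathrm{Aut}(\mathbb F)$, $\mathcal R=\mathbb F[x;\theta]$ the skew polynomial ring (elements $\sum f_ix^i$ with left coefficients, $xb=\theta(b)x$). Fix $n\in\mathbb N$. $\mathcal S_a=\mathcal R/\mathcal R(x^n-a)$ is a left $\mathcal R$-module, $\overline f$ the coset of $f$; the product $\mathfrak p_a(u)\overline f$ means $\overline{pf}$ for any representative $p$ of $\mathfrak p_a(u)$. $\mathfrak p_a:\mathbb F^n\to\mathcal S_a$, $(c_0,\dots,c_{n-1})\mapsto\overline{\sum_{i=0}^{n-1}c_ix^i}$, $\mathfrak v_a=\mathfrak p_a^{-1}$. $M^\theta_a(\overline f)$ is the $n\times n$ matrix whose row with index $i$ ($0\le i\le n-1$) is $\mathfrak v_a(\overline{x^if})$; $\mathrm{im}$ denotes row space. *)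

theory Defs
  imports "HOL-Computational_Algebra.Polynomial" "Jordan_Normal_Form.Matrix"
begin

definition is_field_aut :: "('a::field \<Rightarrow> 'a) \<Rightarrow> bool" where
  "is_field_aut \<theta> \<longleftrightarrow> bij \<theta> \<and> (\<forall>x y. \<theta> (x + y) = \<theta> x + \<theta> y) \<and> (\<forall>x y. \<theta> (x * y) = \<theta> x * \<theta> y)"

text \<open>Skew polynomial ring F[x;theta]: elements are represented by their (left) coefficient
  sequences (type 'a poly); the multiplication is the skew one, x b = theta(b) x, i.e.
  (f_i x^i)(g_j x^j) = f_i theta^i(g_j) x^(i+j).\<close>
definition skew_mult :: "('a::field \<Rightarrow> 'a) \<Rightarrow> 'a poly \<Rightarrow> 'a poly \<Rightarrow> 'a poly" where
  "skew_mult \<theta> f g =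
     (\<Sum>i\<le>degree f. \<Sum>j\<le>degree g. monom (coeff f i * (\<theta> ^^ i) (coeff g j)) (i + j))"

text \<open>Equality of cosets in S_a = R / R(x^n - a):  f-bar = g-bar.\<close>
definition skew_cong :: "('a::field \<Rightarrow> 'a) \<Rightarrow> nat \<Rightarrow> 'a \<Rightarrow> 'a poly \<Rightarrow> 'a poly \<Rightarrow> bool" where
  "skew_cong \<theta> n a f g \<longleftrightarrow> (\<exists>q. f - g = skew_mult \<theta> q (monom 1 n - [:a:]))"

text \<open>The representative sum_i c_i x^i of p_a(c); p_a(c) is its coset.\<close>
definition pvec :: "'a::field vec \<Rightarrow> 'a poly" where
  "pvec c = (\<Sum>i<dim_vec c. monom (c $ i) i)"

definition vmap :: "('a::field \<Rightarrow> 'a) \<Rightarrow> nat \<Rightarrow> 'a \<Rightarrow> 'a poly \<Rightarrow> 'a vec" where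
  "vmap \<theta> n a g = (THE c. c \<in> carrier_vec n \<and> skew_cong \<theta> n a (pvec c) g)"

definition Mmat :: "('a::field \<Rightarrow> 'a) \<Rightarrow> nat \<Rightarrow> 'a \<Rightarrow> 'a poly \<Rightarrow> 'a mat" where
  "Mmat \<theta> n a f = mat n n (\<lambda>(i, j). vmap \<theta> n a (skew_mult \<theta> (monom 1 i) f) $ j)"

end

theory Submission imports Defs begin

locale skew =
  fixes \<theta> :: "'a::field \<Rightarrow> 'a"
  assumes aut: "is_field_aut \<theta>"
begin

lemma th_add: "\<theta> (x + y) = \<theta> x + \<theta> y" using aut unfolding is_field_aut_def by blast
lemma th_mult: "\<theta> (x * y) = \<theta> x * \<theta> y" using aut unfolding is_field_aut_def by blast
lemma th_bij: "bij \<theta>" using aut unfolding is_field_aut_def by blast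
lemma th_0: "\<theta> 0 = 0"
proof -
  have "\<theta> 0 = \<theta> 0 + \<theta> 0" using th_add[of 0 0] by simp
  then show ?thesis by (metis add_cancel_right_right)
qed
lemma th_1: "\<theta> 1 = 1"
proof -
  obtain y where "\<theta> y = 1" using th_bij by (metis bij_pointE)
  moreover have "\<theta> y = \<theta> y * \<theta> 1" using th_mult[of y 1] by simp
  ultimately show ?thesis by simp
qed
lemma th_eq0: "\<theta> x = 0 \<longleftrightarrow> x = 0"
  using th_bij th_0 by (metis bij_pointE)

lemma T_add: "(\<theta>^^i) (x + y) = (\<theta>^^i) x + (\<theta>^^i) y"
  by (induction i) (auto simp: th_add)
lemma T_mult: "(\<theta>^^i) (x * y) = (\<theta>^^i) x * (\<theta>^^i) y"
  by (induction i) (auto simp: th_mult)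
lemma T_0[simp]: "(\<theta>^^i) 0 = 0"
  by (induction i) (auto simp: th_0)
lemma T_1[simp]: "(\<theta>^^i) 1 = 1"
  by (induction i) (auto simp: th_1)
lemma T_eq0[simp]: "(\<theta>^^i) x = 0 \<longleftrightarrow> x = 0"
  by (induction i) (auto simp: th_eq0)
lemma T_minus: "(\<theta>^^i) (- x) = - (\<theta>^^i) x"
  using T_add[of i x "-x"] by (metis T_0 add.right_inverse neg_eq_iff_add_eq_0)
lemma T_sum: "(\<theta>^^i) (sum g A) = (\<Sum>x\<in>A. (\<theta>^^i) (g x))"
  by (induction A rule: infinite_finite_induct) (auto simp: T_add)
lemma T_comp: "(\<theta>^^i) ((\<theta>^^j) x) = (\<theta>^^(i+j)) x"
  by (simp add: funpow_add)

lemma coeff_skew: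
  "coeff (skew_mult \<theta> f g) k = (\<Sum>i\<le>k. coeff f i * (\<theta>^^i) (coeff g (k - i)))"
proof -
  define X where "X i j = coeff f i * (\<theta>^^i) (coeff g j)" for i j
  have inner: "(\<Sum>j\<le>degree g. if i + j = k then X i j else 0)
        = (if i \<le> k \<and> k - i \<le> degree g then X i (k - i) else 0)" for i
  proof (cases "i \<le> k")
    case True
    have "(\<Sum>j\<le>degree g. if i + j = k then X i j else 0) = (\<Sum>j\<le>degree g. if k - i = j then X i j else 0)"
      by (rule sum.cong) (use True in auto)
    also have "\<dots> = (if k - i \<in> {..degree g} then X i (k - i) else 0)" by simp
    finally show ?thesis using True by simp
  next
    case False
    then show ?thesis by (auto intro!: sum.neutral)
  qed
  define m where "m = max (degree f) k"
  have "coeff (skew_mult \<theta> f g) k = (\<Sum>i\<le>degree f. \<Sum>j\<le>degree g. if i + j = k then X i j else 0)"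
    unfolding skew_mult_def X_def by (simp add: coeff_sum coeff_monom)
  also have "\<dots> = (\<Sum>i\<le>degree f. if i \<le> k then X i (k - i) else 0)"
  proof (rule sum.cong[OF refl])
    fix i show "(\<Sum>j\<le>degree g. if i + j = k then X i j else 0) = (if i \<le> k then X i (k - i) else 0)"
      using inner[of i] by (auto simp: X_def coeff_eq_0)
  qed
  also have "\<dots> = (\<Sum>i\<le>m. if i \<le> k then X i (k - i) else 0)"
    by (rule sum.mono_neutral_left) (auto simp: m_def X_def coeff_eq_0)
  also have "\<dots> = (\<Sum>i\<le>k. X i (k - i))"
    by (rule sum.mono_neutral_cong_right) (auto simp: m_def)
  finally show ?thesis unfolding X_def .
qed

abbreviation sm where "sm \<equiv> skew_mult \<theta>"

lemma sm_add_left: "sm (f + g) h = sm f h + sm g h"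
  by (rule poly_eqI) (simp add: coeff_skew distrib_right sum.distrib)
lemma sm_add_right: "sm f (g + h) = sm f g + sm f h"
  by (rule poly_eqI) (simp add: coeff_skew T_add distrib_left sum.distrib)
lemma sm_smult_left: "sm (Polynomial.smult c f) g = Polynomial.smult c (sm f g)"
  by (rule poly_eqI) (simp add: coeff_skew sum_distrib_left mult.assoc)
lemma sm_zero_left[simp]: "sm 0 g = 0"
  by (rule poly_eqI) (simp add: coeff_skew)
lemma sm_diff_left: "sm (f - g) h = sm f h - sm g h"
  using sm_add_left[of "f - g" g h] by (simp add: algebra_simps)
lemma sm_minus_left: "sm (- f) h = - sm f h"
  using sm_diff_left[of 0 f h] by simp
lemma sm_sum_left: "sm (\<Sum>i\<in>A. F i) h = (\<Sum>i\<in>A. sm (F i) h)"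
  by (induction A rule: infinite_finite_induct) (auto simp: sm_add_left)

lemma coeff_sm_monom:
  "coeff (sm (monom c l) g) k = (if l \<le> k then c * (\<theta>^^l) (coeff g (k - l)) else 0)"
proof -
  have "coeff (sm (monom c l) g) k = (\<Sum>i\<le>k. if l = i then c * (\<theta>^^i) (coeff g (k - i)) else 0)"
    unfolding coeff_skew by (rule sum.cong) (auto simp: coeff_monom)
  also have "\<dots> = (if l \<le> k then c * (\<theta>^^l) (coeff g (k - l)) else 0)"
    by simp
  finally show ?thesis .
qed

lemma sm_monom_assoc: "sm (sm (monom c l) g) h = sm (monom c l) (sm g h)"
proof (rule poly_eqI)
  fix k
  show "coeff (sm (sm (monom c l) g) h) k = coeff (sm (monom c l) (sm g h)) k"
  proof (cases "l \<le> k")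
    case False
    then show ?thesis by (auto simp: coeff_skew coeff_sm_monom intro!: sum.neutral)
  next
    case True
    define G where "G i = c * (\<theta>^^l) (coeff g (i - l)) * (\<theta>^^i) (coeff h (k - i))" for i
    have "coeff (sm (sm (monom c l) g) h) k = (\<Sum>i\<le>k. if l \<le> i then G i else 0)"
      unfolding coeff_skew[of "sm (monom c l) g" h] coeff_sm_monom G_def by (rule sum.cong) auto
    also have "\<dots> = (\<Sum>i\<in>{l..k}. G i)"
      by (rule sum.mono_neutral_cong_right) auto
    also have "\<dots> = (\<Sum>j\<in>{0..k-l}. G (j + l))"
      using sum.shift_bounds_cl_nat_ivl[of G 0 l "k - l"] True by simp
    also have "\<dots> = (\<Sum>j\<le>k-l. c * ((\<theta>^^l) (coeff g j) * (\<theta>^^(l+j)) (coeff h (k - l - j))))"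
      by (rule sum.cong) (auto simp: G_def add.commute diff_diff_left mult.assoc atLeast0AtMost)
    also have "\<dots> = coeff (sm (monom c l) (sm g h)) k"
      using True by (simp add: coeff_sm_monom coeff_skew[of g h] T_sum T_mult T_comp sum_distrib_left)
    finally show ?thesis .
  qed
qed

lemma sm_assoc: "sm (sm f g) h = sm f (sm g h)"
proof -
  have f: "f = (\<Sum>i\<le>degree f. monom (coeff f i) i)" by (simp add: poly_as_sum_of_monoms)
  have "sm (sm f g) h = (\<Sum>i\<le>degree f. sm (sm (monom (coeff f i) i) g) h)"
    by (subst f) (simp add: sm_sum_left)
  also have "\<dots> = (\<Sum>i\<le>degree f. sm (monom (coeff f i) i) (sm g h))"
    by (simp add: sm_monom_assoc)
  also have "\<dots> = sm f (sm g h)"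
    by (subst (2) f) (simp add: sm_sum_left)
  finally show ?thesis .
qed

lemma right_div:
  assumes h: "h \<noteq> 0" "degree h \<le> n" and n: "0 < n"
  shows "\<exists>q r. g = sm q h + r \<and> degree r < n"
proof (induction "degree g" arbitrary: g rule: less_induct)
  case less
  show ?case
  proof (cases "degree g < n")
    case True
    then show ?thesis by (intro exI[of _ 0] exI[of _ g]) simp
  next
    case False
    define d where "d = degree g"
    define e where "e = degree h"
    have ed: "e \<le> d" using False h unfolding d_def e_def by simp
    define c where "c = lead_coeff g / (\<theta>^^(d - e)) (lead_coeff h)"
    define t where "t = monom c (d - e)"
    define g' where "g' = g - sm t h"
    have lh: "(\<theta>^^(d - e)) (lead_coeff h) \<noteq> 0" using h by simp
    have "coeff g' k = 0" if "k \<ge> d" for k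
    proof (cases "k = d")
      case True
      then show ?thesis using ed lh
        by (simp add: g'_def t_def coeff_sm_monom c_def d_def e_def)
    next
      case False
      then have "k > d" using that by simp
      then have "coeff g k = 0" "coeff h (k - (d - e)) = 0" using ed
        by (auto simp: d_def e_def coeff_eq_0)
      then show ?thesis by (simp add: g'_def t_def coeff_sm_monom)
    qed
    then have "degree g' \<le> d - 1"
      by (intro degree_le) auto
    moreover have "d > 0" using False n unfolding d_def by simp
    ultimately have "degree g' < degree g" unfolding d_def by simp
    from less[OF this] obtain q r where "g' = sm q h + r" "degree r < n" by blast
    then have "g = sm (q + t) h + r" by (simp add: g'_def sm_add_left algebra_simps)
    then show ?thesis using \<open>degree r < n\<close> by blast
  qed
qed

lemma sm_diff_right: "sm f (g - h) = sm f g - sm f h"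
  using sm_add_right[of f "g - h" h] by (simp add: algebra_simps)

lemma coeff_const1[simp]: "coeff [:a:] k = (if k = 0 then a else 0)"
  by (cases k) simp_all

lemma coeff_mpol: "coeff (monom 1 n - [:a:]) k = (if k = n then 1 else 0) - (if k = 0 then a else 0)"
  by (cases k) (simp_all add: coeff_monom)

lemma mpol_nz: "0 < n \<Longrightarrow> monom 1 n - [:a::'a:] \<noteq> 0"
proof -
  assume "0 < n"
  then have c1: "coeff (monom 1 n - [:a:]) n = 1" by (simp add: coeff_mpol)
  show ?thesis
  proof
    assume h: "monom 1 n - [:a:] = 0"
    have "coeff (monom 1 n - [:a:]) n = 0" by (simp only: h coeff_0)
    with c1 show False by simp
  qed
qed

lemma mpol_deg: "degree (monom 1 n - [:a:]) \<le> n"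
  by (rule degree_le) (auto simp: coeff_mpol)

lemma lead_sm_mpol:
  assumes q: "q \<noteq> 0" and n: "0 < n"
  shows "coeff (sm q (monom 1 n - [:a:])) (degree q + n) = lead_coeff q"
proof -
  define G where "G i = coeff q i * (\<theta>^^i) (coeff (monom 1 n - [:a:]) (degree q + n - i))" for i
  have "coeff (sm q (monom 1 n - [:a:])) (degree q + n) = (\<Sum>i\<le>degree q + n. G i)"
    unfolding coeff_skew G_def ..
  also have "\<dots> = G (degree q) + (\<Sum>i\<in>{..degree q + n} - {degree q}. G i)"
    by (rule sum.remove) auto
  also have "(\<Sum>i\<in>{..degree q + n} - {degree q}. G i) = 0"
  proof (rule sum.neutral, intro ballI)
    fix i assume i: "i \<in> {..degree q + n} - {degree q}"
    show "G i = 0"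
    proof (cases "i < degree q")
      case True
      then show ?thesis using n by (simp add: G_def coeff_mpol)
    next
      case False
      then have "i > degree q" using i by auto
      then show ?thesis by (simp add: G_def coeff_eq_0)
    qed
  qed
  also have "G (degree q) = lead_coeff q" using n by (simp add: G_def coeff_mpol)
  finally show ?thesis by simp
qed

lemma small_zero:
  assumes "degree p < n" "p = sm q (monom 1 n - [:a:])" "0 < n"
  shows "q = 0"
proof (rule ccontr)
  assume q: "q \<noteq> 0"
  have "coeff p (degree q + n) = lead_coeff q" using lead_sm_mpol[OF q assms(3)] assms(2) by simp
  moreover have "coeff p (degree q + n) = 0" using assms(1) by (intro coeff_eq_0) simp
  ultimately show False using q by simp
qed

lemma coeff_pvec: "coeff (pvec c) k = (if k < dim_vec c then c $ k else 0)"
  unfolding pvec_def by (simp add: coeff_sum coeff_monom)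

lemma pvec_vec: "degree r < n \<Longrightarrow> pvec (vec n (coeff r)) = r"
  by (rule poly_eqI) (auto simp: coeff_pvec coeff_eq_0)

lemma degree_pvec: "dim_vec c = n \<Longrightarrow> 0 < n \<Longrightarrow> degree (pvec c) < n"
proof -
  assume "dim_vec c = n" "0 < n"
  then have "degree (pvec c) \<le> n - 1" by (intro degree_le) (auto simp: coeff_pvec)
  then show ?thesis using \<open>0 < n\<close> by simp
qed

lemma pvec_inj: assumes "dim_vec c = dim_vec d" "pvec c = pvec d" shows "c = d"
proof (rule eq_vecI)
  fix i assume i: "i < dim_vec d"
  have "coeff (pvec c) i = coeff (pvec d) i" using assms(2) by simp
  then show "c $ i = d $ i" using i assms(1) by (simp add: coeff_pvec)
qed (rule assms(1))

lemma cong_trans: "skew_cong \<theta> n a x y \<Longrightarrow> skew_cong \<theta> n a y z \<Longrightarrow> skew_cong \<theta> n a x z"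
  unfolding skew_cong_def
proof (elim exE)
  fix q q' assume "x - y = sm q (monom 1 n - [:a:])" "y - z = sm q' (monom 1 n - [:a:])"
  then have "x - z = sm (q + q') (monom 1 n - [:a:])" by (simp add: sm_add_left algebra_simps)
  then show "\<exists>q. x - z = sm q (monom 1 n - [:a:])" ..
qed

lemma cong_sym: "skew_cong \<theta> n a x y \<Longrightarrow> skew_cong \<theta> n a y x"
  unfolding skew_cong_def
proof (elim exE)
  fix q assume "x - y = sm q (monom 1 n - [:a:])"
  then have "y - x = sm (- q) (monom 1 n - [:a:])" by (simp add: sm_minus_left algebra_simps)
  then show "\<exists>q. y - x = sm q (monom 1 n - [:a:])" ..
qed

lemma vmap_ex1:
  assumes n: "0 < n"
  shows "\<exists>!c. c \<in> carrier_vec n \<and> skew_cong \<theta> n a (pvec c) g"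
proof -
  obtain q r where qr: "g = sm q (monom 1 n - [:a:]) + r" "degree r < n"
    using right_div[OF mpol_nz[OF n] mpol_deg n] by blast
  define c where "c = vec n (coeff r)"
  have "pvec c = r" unfolding c_def using pvec_vec[OF qr(2)] .
  then have "pvec c - g = sm (- q) (monom 1 n - [:a:])" using qr(1) by (simp add: sm_minus_left)
  then have ex: "c \<in> carrier_vec n \<and> skew_cong \<theta> n a (pvec c) g"
    unfolding skew_cong_def c_def by auto
  have un: "d = c" if d: "d \<in> carrier_vec n" "skew_cong \<theta> n a (pvec d) g" for d
  proof -
    have "skew_cong \<theta> n a (pvec d) (pvec c)" using cong_trans[OF d(2) cong_sym] ex by blast
    then obtain q' where q': "pvec d - pvec c = sm q' (monom 1 n - [:a:])"
      unfolding skew_cong_def by blast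
    have "degree (pvec d) \<le> n - 1" "degree (pvec c) \<le> n - 1"
      using degree_pvec[of d n] degree_pvec[of c n] d ex n by auto
    then have "degree (pvec d - pvec c) \<le> n - 1" by (rule degree_diff_le)
    then have "degree (pvec d - pvec c) < n" using n by simp
    then have "q' = 0" using small_zero q' n by blast
    then have "pvec d = pvec c" using q' by simp
    then show ?thesis using pvec_inj[of d c] d(1) ex carrier_vecD by metis
  qed
  show ?thesis using ex un by blast
qed

lemma vmap_prop:
  "0 < n \<Longrightarrow> vmap \<theta> n a g \<in> carrier_vec n \<and> skew_cong \<theta> n a (pvec (vmap \<theta> n a g)) g"
  unfolding vmap_def by (rule theI') (rule vmap_ex1)

lemma vmap_eq:
  "0 < n \<Longrightarrow> c \<in> carrier_vec n \<Longrightarrow> skew_cong \<theta> n a (pvec c) g \<Longrightarrow> vmap \<theta> n a g = c"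
  unfolding vmap_def using the1_equality[OF vmap_ex1] by blast

lemma part1:
  assumes n: "0 < n" and u: "u \<in> carrier_vec n"
  shows "skew_cong \<theta> n a (pvec ((Mmat \<theta> n a f)\<^sup>T *\<^sub>v u)) (sm (pvec u) f)"
proof -
  define V where "V i = vmap \<theta> n a (sm (monom 1 i) f)" for i
  have Vc: "V i \<in> carrier_vec n" "skew_cong \<theta> n a (pvec (V i)) (sm (monom 1 i) f)" for i
    using vmap_prop[OF n] unfolding V_def by auto
  have du: "dim_vec u = n" using u by auto
  have eq: "(Mmat \<theta> n a f)\<^sup>T *\<^sub>v u = vec n (\<lambda>j. \<Sum>i<n. V i $ j * u $ i)"
    by (rule eq_vecI) (auto simp: Mmat_def V_def scalar_prod_def du atLeast0LessThan)
  have pv: "pvec ((Mmat \<theta> n a f)\<^sup>T *\<^sub>v u) = (\<Sum>i<n. Polynomial.smult (u $ i) (pvec (V i)))"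
  proof (rule poly_eqI)
    fix k
    have dV: "dim_vec (V i) = n" for i using Vc(1)[of i] by auto
    show "coeff (pvec ((Mmat \<theta> n a f)\<^sup>T *\<^sub>v u)) k = coeff (\<Sum>i<n. Polynomial.smult (u $ i) (pvec (V i))) k"
      unfolding eq by (auto simp: coeff_pvec coeff_sum dV mult.commute)
  qed
  have "\<forall>i. \<exists>q. pvec (V i) - sm (monom 1 i) f = sm q (monom 1 n - [:a:])"
    using Vc(2) unfolding skew_cong_def by blast
  then obtain q where q: "\<And>i. pvec (V i) - sm (monom 1 i) f = sm (q i) (monom 1 n - [:a:])"
    by metis
  have pu: "sm (pvec u) f = (\<Sum>i<n. Polynomial.smult (u $ i) (sm (monom 1 i) f))"
    unfolding pvec_def du sm_sum_left
    by (rule sum.cong) (auto simp: sm_smult_left[symmetric] smult_monom)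
  have "pvec ((Mmat \<theta> n a f)\<^sup>T *\<^sub>v u) - sm (pvec u) f
      = (\<Sum>i<n. Polynomial.smult (u $ i) (pvec (V i) - sm (monom 1 i) f))"
    unfolding pv pu by (simp add: sum_subtractf smult_diff_right)
  also have "\<dots> = sm (\<Sum>i<n. Polynomial.smult (u $ i) (q i)) (monom 1 n - [:a:])"
    by (simp add: q sm_sum_left sm_smult_left)
  finally show ?thesis unfolding skew_cong_def by blast
qed

lemma card_carrier_vec: "card (carrier_vec n :: 'b::finite vec set) = card (UNIV :: 'b set) ^ n"
  and finite_carrier_vec: "finite (carrier_vec n :: 'b::finite vec set)"
proof -
  have b: "bij_betw list_of_vec (carrier_vec n :: 'b vec set) {xs. set xs \<subseteq> UNIV \<and> length xs = n}"
  proof (rule bij_betwI')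
    show "\<And>x y. x \<in> carrier_vec n \<Longrightarrow> y \<in> carrier_vec n \<Longrightarrow> (list_of_vec x = list_of_vec y) = (x = y)"
      by (metis vec_list)
    show "\<And>x. x \<in> carrier_vec n \<Longrightarrow> list_of_vec x \<in> {xs. set xs \<subseteq> UNIV \<and> length xs = n}"
      by auto
    show "\<And>y. y \<in> {xs. set xs \<subseteq> UNIV \<and> length xs = n} \<Longrightarrow> \<exists>x\<in>carrier_vec n. y = list_of_vec x"
      by (metis (mono_tags, lifting) carrier_vec_def dim_vec_of_list list_vec mem_Collect_eq)
  qed
  show "card (carrier_vec n :: 'b::finite vec set) = card (UNIV :: 'b set) ^ n"
    using bij_betw_same_card[OF b] card_lists_length_eq[of "UNIV::'b set" n] by simp
  show "finite (carrier_vec n :: 'b::finite vec set)"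
    using bij_betw_finite[OF b] finite_lists_length_eq[of "UNIV::'b set" n] by simp
qed

end

lemma pigeon:
  fixes \<theta> :: "'a::{field,finite} \<Rightarrow> 'a"
  assumes aut: "is_field_aut \<theta>" and n: "0 < n"
  shows "\<exists>h. h \<noteq> 0 \<and> degree h \<le> n \<and> skew_cong \<theta> n a (skew_mult \<theta> h f) 0"
proof -
  interpret skew \<theta> by unfold_locales (rule aut)
  define \<phi> where "\<phi> c = vmap \<theta> n a (sm (pvec c) f)" for c
  have img: "\<phi> ` carrier_vec (Suc n) \<subseteq> carrier_vec n"
    using vmap_prop[OF n] unfolding \<phi>_def by auto
  have c2: "2 \<le> card (UNIV :: 'a set)"
  proof -
    have "card {0::'a, 1} \<le> card (UNIV :: 'a set)" by (rule card_mono) auto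
    then show ?thesis by simp
  qed
  have "\<not> inj_on \<phi> (carrier_vec (Suc n))"
  proof
    assume "inj_on \<phi> (carrier_vec (Suc n))"
    then have "card (carrier_vec (Suc n) :: 'a vec set) \<le> card (carrier_vec n :: 'a vec set)"
      using card_inj_on_le[OF _ img finite_carrier_vec] by blast
    then have "card (UNIV :: 'a set) ^ Suc n \<le> card (UNIV :: 'a set) ^ n"
      by (simp only: card_carrier_vec)
    then show False using c2 by simp
  qed
  then obtain c d where cd: "c \<in> carrier_vec (Suc n)" "d \<in> carrier_vec (Suc n)" "c \<noteq> d" "\<phi> c = \<phi> d"
    unfolding inj_on_def by blast
  have A: "skew_cong \<theta> n a (sm (pvec c) f) (pvec (\<phi> c))"
    using vmap_prop[OF n] cong_sym unfolding \<phi>_def by blast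
  have B: "skew_cong \<theta> n a (pvec (\<phi> d)) (sm (pvec d) f)"
    using vmap_prop[OF n] unfolding \<phi>_def by blast
  have "skew_cong \<theta> n a (sm (pvec c) f) (sm (pvec d) f)"
    using cong_trans[OF A[unfolded cd(4)] B] .
  then have cg: "skew_cong \<theta> n a (sm (pvec c - pvec d) f) 0"
    unfolding skew_cong_def by (simp add: sm_diff_left)
  have "dim_vec c = dim_vec d" using cd(1,2) by auto
  then have "pvec c \<noteq> pvec d" using pvec_inj cd(3) by blast
  then have "pvec c - pvec d \<noteq> 0" by simp
  moreover have "degree (pvec c - pvec d) \<le> n"
  proof -
    have "degree (pvec c) \<le> n" "degree (pvec d) \<le> n"
      using degree_pvec[of c "Suc n"] degree_pvec[of d "Suc n"] cd by auto
    then show ?thesis by (rule degree_diff_le)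
  qed
  ultimately show ?thesis using cg by blast
qed

theorem proposition3p3:
  fixes \<theta> :: "'a::{field,finite} \<Rightarrow> 'a" and a :: 'a and n :: nat
  assumes "is_field_aut \<theta>" and "a \<noteq> 0" and "0 < n"
  shows "(\<forall>u \<in> carrier_vec n. \<forall>f.
            skew_cong \<theta> n a (pvec ((Mmat \<theta> n a f)\<^sup>T *\<^sub>v u)) (skew_mult \<theta> (pvec u) f))
       \<and> (\<forall>f. {(Mmat \<theta> n a f)\<^sup>T *\<^sub>v u | u. u \<in> carrier_vec n}
              = {vmap \<theta> n a (skew_mult \<theta> g f) | g. True})"
proof -
  interpret skew \<theta> by unfold_locales (rule assms(1))
  note n = assms(3)
  have P1: "\<forall>u \<in> carrier_vec n. \<forall>f.
            skew_cong \<theta> n a (pvec ((Mmat \<theta> n a f)\<^sup>T *\<^sub>v u)) (skew_mult \<theta> (pvec u) f)"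
    using part1[OF n] by blast
  have dimM: "(Mmat \<theta> n a f)\<^sup>T *\<^sub>v u \<in> carrier_vec n" for f u
    unfolding carrier_vec_def by (simp add: Mmat_def)
  have P2: "{(Mmat \<theta> n a f)\<^sup>T *\<^sub>v u | u. u \<in> carrier_vec n}
              = {vmap \<theta> n a (skew_mult \<theta> g f) | g. True}" for f
  proof (intro equalityI subsetI)
    fix x assume "x \<in> {(Mmat \<theta> n a f)\<^sup>T *\<^sub>v u | u. u \<in> carrier_vec n}"
    then obtain u where u: "u \<in> carrier_vec n" "x = (Mmat \<theta> n a f)\<^sup>T *\<^sub>v u" by blast
    have "vmap \<theta> n a (sm (pvec u) f) = x"
      using vmap_eq[OF n dimM part1[OF n u(1)]] u(2) by simp
    then show "x \<in> {vmap \<theta> n a (skew_mult \<theta> g f) | g. True}" by blast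
  next
    fix x assume "x \<in> {vmap \<theta> n a (skew_mult \<theta> g f) | g. True}"
    then obtain g where g: "x = vmap \<theta> n a (sm g f)" by blast
    obtain h where h: "h \<noteq> 0" "degree h \<le> n" "skew_cong \<theta> n a (sm h f) 0"
      using pigeon[OF assms(1) n] by blast
    obtain s where s: "sm h f = sm s (monom 1 n - [:a:])"
      using h(3) unfolding skew_cong_def by auto
    obtain q r where qr: "g = sm q h + r" "degree r < n"
      using right_div[OF h(1,2) n] by blast
    define u where "u = vec n (coeff r)"
    have u: "u \<in> carrier_vec n" "pvec u = r" unfolding u_def using pvec_vec[OF qr(2)] by auto
    have "sm g f = sm (sm q s) (monom 1 n - [:a:]) + sm r f"
      unfolding qr(1) sm_add_left sm_assoc s ..
    then have "sm r f - sm g f = sm (- sm q s) (monom 1 n - [:a:])"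
      by (simp add: sm_minus_left)
    then have "skew_cong \<theta> n a (sm r f) (sm g f)" unfolding skew_cong_def by blast
    then have "skew_cong \<theta> n a (pvec ((Mmat \<theta> n a f)\<^sup>T *\<^sub>v u)) (sm g f)"
      using cong_trans[OF part1[OF n u(1), unfolded u(2)]] by blast
    then have "vmap \<theta> n a (sm g f) = (Mmat \<theta> n a f)\<^sup>T *\<^sub>v u" by (rule vmap_eq[OF n dimM])
    then have "x = (Mmat \<theta> n a f)\<^sup>T *\<^sub>v u" using g by simp
    then show "x \<in> {(Mmat \<theta> n a f)\<^sup>T *\<^sub>v u | u. u \<in> carrier_vec n}" using u(1) by blast
  qed
  show ?thesis using P1 P2 by blast
qed

end
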